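(* Let $K$ satisfy the standing kernel assumptions (see context) and assume $K(x,y)\ge c_0>0$ for all $x,y>0$. Let $f$ be a self-similar profile for $K$ with $\int_0^\infty x f(x)\,dx=1$ and $Q(q)=\int_0^\infty(1-e^{-qx})f(x)\,dx$. Then: $\lim_{q\to\infty}Q(q)<\infty$, and hence $\int_0^\infty f(x)\,dx<\infty$; $\sup_{q>0}|qQ'(q)|\le C$ for some constant $C$; $\int_0^\infty\int_0^\infty K(x,y)f(x)f(y)\,dx\,dy<\infty$; and $\lim_{q\to\infty}\mathcal{M}(f,f)(q)$ exists and is finite.
   Context: Standing kernel assumptions: $\alpha\in[0,1)$, $\varepsilon>0$, $C_0>0$; $K:(0,\infty)^2\to[0,\infty)$ is symmetric, homogeneous of degree zero, differentiable, and with $W:=K-2$: $W\ge-\varepsilon$, $W(x,y)\le \varepsilon((x/y)^{\alpha}+(y/x)^{\alpha})$, $|\partial_x K(x,y)|\le \frac{C_0\varepsilon}{x}((x/y)^{\alpha}+(y/x)^{\alpha})$. A self-similar profile for $K$ is $f\in L^1_{loc}(0,\infty)$, $f\ge0$, $\int_0^\infty xf\,dx<\infty$, with $x^2 f(x)=\int_0^x dy\int_{x-y}^\infty dz\,K(y,z)\,y\,f(y)f(z)$ for a.e. $x>0$. $\mathcal{M}(f,f)(q)=\frac12\int_0^\infty\int_0^\infty W(x,y)f(x)f(y)(1-e^{-qx})(1-e^{-qy})\,dx\,dy$. *)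

theory Defs
  imports "HOL-Analysis.Analysis"
begin

definition W :: "(real \<Rightarrow> real \<Rightarrow> real) \<Rightarrow> real \<Rightarrow> real \<Rightarrow> real" where
  "W K x y = K x y - 2"

definition kernel_assms ::
  "real \<Rightarrow> real \<Rightarrow> real \<Rightarrow> (real \<Rightarrow> real \<Rightarrow> real) \<Rightarrow> bool" where
  "kernel_assms \<alpha> \<epsilon> C\<^sub>0 K \<longleftrightarrow>
     0 \<le> \<alpha> \<and> \<alpha> < 1 \<and> \<epsilon> > 0 \<and> C\<^sub>0 > 0 \<and>
     (\<forall>x>0. \<forall>y>0. K x y \<ge> 0) \<and>
     (\<forall>x>0. \<forall>y>0. K x y = K y x) \<and>
     (\<forall>t>0. \<forall>x>0. \<forall>y>0. K (t * x) (t * y) = K x y) \<and>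
     (\<forall>x>0. \<forall>y>0. (\<lambda>p. K (fst p) (snd p)) differentiable (at (x, y))) \<and>
     (\<forall>x>0. \<forall>y>0. W K x y \<ge> - \<epsilon>) \<and>
     (\<forall>x>0. \<forall>y>0. W K x y \<le> \<epsilon> * ((x / y) powr \<alpha> + (y / x) powr \<alpha>)) \<and>
     (\<forall>x>0. \<forall>y>0. \<bar>deriv (\<lambda>s. K s y) x\<bar>
                    \<le> C\<^sub>0 * \<epsilon> / x * ((x / y) powr \<alpha> + (y / x) powr \<alpha>))"

definition self_similar_profile ::
  "(real \<Rightarrow> real \<Rightarrow> real) \<Rightarrow> (real \<Rightarrow> real) \<Rightarrow> bool" where
  "self_similar_profile K f \<longleftrightarrow>
     (\<forall>a b. 0 < a \<longrightarrow> set_integrable lebesgue {a..b} f) \<and>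
     (AE x in lebesgue. x > 0 \<longrightarrow> f x \<ge> 0) \<and>
     set_integrable lebesgue {0<..} (\<lambda>x. x * f x) \<and>
     (AE x in lebesgue. x > 0 \<longrightarrow>
        ennreal (x\<^sup>2 * f x) =
          (\<integral>\<^sup>+ y\<in>{0<..<x}. (\<integral>\<^sup>+ z\<in>{x - y<..}. ennreal (K y z * y * f y * f z) \<partial>lebesgue) \<partial>lebesgue))"

definition Qf :: "(real \<Rightarrow> real) \<Rightarrow> real \<Rightarrow> real" where
  "Qf f q = (LINT x:{0<..}|lebesgue. (1 - exp (- q * x)) * f x)"

definition Mff :: "(real \<Rightarrow> real \<Rightarrow> real) \<Rightarrow> (real \<Rightarrow> real) \<Rightarrow> real \<Rightarrow> real" where
  "Mff K f q = 1 / 2 * (LINT x:{0<..}|lebesgue. (LINT y:{0<..}|lebesgue.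
       W K x y * f x * f y * (1 - exp (- q * x)) * (1 - exp (- q * y))))"

end

theory Submission
  imports Defs
begin


lemma sigma_finite_lebesgue: "sigma_finite_measure (lebesgue :: real measure)"
proof
  show "\<exists>A::real set set. countable A \<and> A \<subseteq> sets lebesgue \<and> \<Union>A = space lebesgue \<and> (\<forall>a\<in>A. emeasure lebesgue a \<noteq> \<infinity>)"
    apply (rule exI[of _ "range (\<lambda>n::nat. {-real n..real n})"])
    apply (auto simp: real_arch_simple)
    by (metis abs_le_iff add.inverse_inverse neg_le_iff_le real_arch_simple)
qed

interpretation lebL: sigma_finite_measure "lebesgue :: real measure" by (rule sigma_finite_lebesgue)
interpretation lebP: pair_sigma_finite "lebesgue :: real measure" "lebesgue :: real measure" ..

lemma leb_borel[measurable (raw)]: "g \<in> measurable M (lebesgue::real measure) \<Longrightarrow> g \<in> borel_measurable M"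
  using measurable_compose[OF _ id_borel_measurable_lebesgue] by (simp add: comp_def)

definition K0 :: "(real \<Rightarrow> real \<Rightarrow> real) \<Rightarrow> real \<Rightarrow> real \<Rightarrow> real" where
 "K0 K x y = (if 0 < x \<and> 0 < y then K x y else 0)"

definition fi :: "(real \<Rightarrow> real) \<Rightarrow> real \<Rightarrow> real" where
 "fi f x = indicator {0<..} x * f x"

definition fp :: "(real \<Rightarrow> real) \<Rightarrow> real \<Rightarrow> real" where
 "fp f x = max 0 (fi f x)"

lemma K0_borel:
  assumes "continuous_on ({0<..} \<times> {0<..}) (\<lambda>p. K (fst p) (snd p))"
  shows "(\<lambda>p. K0 K (fst p) (snd p)) \<in> borel_measurable borel"
proof -
  have "(\<lambda>p. indicator ({0<..} \<times> {0<..}) p *\<^sub>R K (fst p) (snd p)) \<in> borel_measurable borel"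
    by (rule borel_measurable_continuous_on_indicator[OF _ assms]) (intro borel_open open_Times; simp)
  moreover have "(\<lambda>p. indicator ({0<..} \<times> {0<..}) p *\<^sub>R K (fst p) (snd p)) = (\<lambda>p. K0 K (fst p) (snd p))"
    by (auto simp: K0_def indicator_def fun_eq_iff)
  ultimately show ?thesis by simp
qed

lemma K0_meas:
  assumes "continuous_on ({0<..} \<times> {0<..}) (\<lambda>p. K (fst p) (snd p))"
    and "g \<in> borel_measurable M" "h \<in> borel_measurable M"
  shows "(\<lambda>x. K0 K (g x) (h x)) \<in> borel_measurable M"
proof -
  have "(\<lambda>x. (g x, h x)) \<in> measurable M borel"
    using assms(2,3) by (simp add: borel_prod[symmetric])
  from measurable_compose[OF this K0_borel[OF assms(1)]] show ?thesis by simp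
qed

lemma K_cont:
  fixes K :: "real \<Rightarrow> real \<Rightarrow> real"
  assumes "\<forall>x>0. \<forall>y>0. (\<lambda>p. K (fst p) (snd p)) differentiable (at (x, y))"
  shows "continuous_on ({0<..} \<times> {0<..}) (\<lambda>p. K (fst p) (snd p))"
proof (rule continuous_at_imp_continuous_on, rule ballI)
  fix p :: "real \<times> real" assume "p \<in> {0<..} \<times> {0<..}"
  then obtain a b where p: "p = (a,b)" "a>0" "b>0" by auto
  then have "(\<lambda>p. K (fst p) (snd p)) differentiable (at (a, b))" using assms by auto
  then show "isCont (\<lambda>p. K (fst p) (snd p)) p"
    unfolding p by (simp add: differentiable_imp_continuous_within)
qed

lemma exp_lip: 
  fixes a b :: real assumes "0 \<le> a" "0 \<le> b"
  shows "\<bar>exp (- a) - exp (- b)\<bar> \<le> \<bar>a - b\<bar>"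
proof -
  have *: "exp (-u) - exp (-v) \<le> v - u" if "0 \<le> u" "u \<le> v" for u v :: real
  proof -
    have "exp (-u) - exp (-v) = exp (-u) * (1 - exp (-(v-u)))"
      by (simp add: algebra_simps exp_diff[symmetric] exp_add[symmetric])
    also have "\<dots> \<le> 1 * (1 - exp (-(v-u)))"
      using that by (intro mult_right_mono) auto
    also have "\<dots> \<le> v - u" using exp_ge_add_one_self[of "u-v"] by (simp, linarith)
    finally show ?thesis .
  qed
  show ?thesis
  proof (cases "a \<le> b")
    case True with *[of a b] assms show ?thesis by auto
  next
    case False with *[of b a] assms show ?thesis by auto
  qed
qed

locale prof =
  fixes K :: "real \<Rightarrow> real \<Rightarrow> real" and f :: "real \<Rightarrow> real" and c0 :: real
  assumes c0: "c0 > 0" and Kc0: "\<forall>x>0. \<forall>y>0. K x y \<ge> c0"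
   and Ksym: "\<forall>x>0. \<forall>y>0. K x y = K y x"
   and Kcont: "continuous_on ({0<..}\<times>{0<..}) (\<lambda>p. K (fst p) (snd p))"
   and xf_int: "set_integrable lebesgue {0<..} (\<lambda>x. x * f x)"
   and fnn: "AE x in lebesgue. x > 0 \<longrightarrow> f x \<ge> 0"
   and eqn: "AE x in lebesgue. x > 0 \<longrightarrow>
        ennreal (x\<^sup>2 * f x) =
          (\<integral>\<^sup>+ y\<in>{0<..<x}. (\<integral>\<^sup>+ z\<in>{x - y<..}. ennreal (K y z * y * f y * f z) \<partial>lebesgue) \<partial>lebesgue)"
begin

lemma K0m[measurable (raw)]: "g \<in> borel_measurable M \<Longrightarrow> h \<in> borel_measurable M \<Longrightarrow> (\<lambda>x. K0 K (g x) (h x)) \<in> borel_measurable M"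
  by (rule K0_meas[OF Kcont])

lemma xfi_int: "integrable lebesgue (\<lambda>x. x * fi f x)"
proof -
  have "(\<lambda>x. indicator {0<..} x *\<^sub>R (x * f x)) = (\<lambda>x. x * fi f x)"
    by (auto simp: fi_def fun_eq_iff)
  with xf_int show ?thesis unfolding set_integrable_def by simp
qed

lemma fi_meas[measurable]: "fi f \<in> borel_measurable lebesgue"
proof -
  have "(\<lambda>x. x * fi f x) \<in> borel_measurable lebesgue" using xfi_int by auto
  then have "(\<lambda>x. (x * fi f x) / x) \<in> borel_measurable lebesgue" by measurable
  moreover have "(\<lambda>x. (x * fi f x) / x) = fi f" by (auto simp: fi_def fun_eq_iff)
  ultimately show ?thesis by simp
qed

lemma fp_meas[measurable]: "fp f \<in> borel_measurable lebesgue"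
  unfolding fp_def by measurable

lemma fp_nn: "fp f x \<ge> 0" by (simp add: fp_def)
lemma fp_0: "x \<le> 0 \<Longrightarrow> fp f x = 0" by (simp add: fp_def fi_def)
lemma fi_0: "x \<le> 0 \<Longrightarrow> fi f x = 0" by (simp add: fi_def)
lemma fp_AE: "AE x in lebesgue. fi f x = fp f x"
  using fnn by eventually_elim (auto simp: fi_def fp_def indicator_def)
lemma fp_AE': "AE x in lebesgue. \<bar>fi f x\<bar> = fp f x"
  using fnn by eventually_elim (auto simp: fi_def fp_def indicator_def)

lemma K0_nn: "K0 K x y \<ge> 0" using Kc0 c0 by (auto simp: K0_def intro: order_trans[of 0 c0])
lemma K0_sym: "K0 K x y = K0 K y x" using Ksym by (auto simp: K0_def)
lemma K0_c0: "x > 0 \<Longrightarrow> y > 0 \<Longrightarrow> K0 K x y \<ge> c0" using Kc0 by (auto simp: K0_def)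

end



context prof begin

lemma eqp: "AE x in lebesgue. x > 0 \<longrightarrow> ennreal (x\<^sup>2 * fp f x) =
   (\<integral>\<^sup>+y. (if 0 < y \<and> y < x then (\<integral>\<^sup>+z. (if x - y < z then ennreal (K0 K y z * y * fp f y * fp f z) else 0) \<partial>lebesgue) else 0) \<partial>lebesgue)"
  using eqn
proof eventually_elim
  case (elim x)
  show ?case
  proof
    assume x: "x > 0"
    have L: "ennreal (x\<^sup>2 * f x) = ennreal (x\<^sup>2 * fp f x)"
    proof (cases "f x \<ge> 0")
      case True then show ?thesis using x by (simp add: fp_def fi_def)
    next
      case False
      then have "x\<^sup>2 * f x \<le> 0" by (simp add: mult_nonneg_nonpos)
      then show ?thesis using False x by (simp add: fp_def fi_def ennreal_neg)
    qed
    have R: "(\<integral>\<^sup>+ y\<in>{0<..<x}. (\<integral>\<^sup>+ z\<in>{x - y<..}. ennreal (K y z * y * f y * f z) \<partial>lebesgue) \<partial>lebesgue)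
     = (\<integral>\<^sup>+y. (if 0 < y \<and> y < x then (\<integral>\<^sup>+z. (if x - y < z then ennreal (K0 K y z * y * fp f y * fp f z) else 0) \<partial>lebesgue) else 0) \<partial>lebesgue)"
      using fnn
    proof (intro nn_integral_cong_AE, eventually_elim)
      case (elim y)
      show ?case
      proof (cases "0 < y \<and> y < x")
        case False then show ?thesis by (auto simp: indicator_def)
      next
        case True
        then have y: "y > 0" "f y \<ge> 0" "y < x" using elim by auto
        have "(\<integral>\<^sup>+ z. ennreal (K y z * y * f y * f z) * indicator {x - y<..} z \<partial>lebesgue) =
          (\<integral>\<^sup>+z. (if x - y < z then ennreal (K0 K y z * y * fp f y * fp f z) else 0) \<partial>lebesgue)"
        proof (intro nn_integral_cong)
          fix z
          show "ennreal (K y z * y * f y * f z) * indicator {x - y<..} z =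
             (if x - y < z then ennreal (K0 K y z * y * fp f y * fp f z) else 0)"
          proof (cases "x - y < z")
            case False then show ?thesis by simp
          next
            case True
            then have z: "z > 0" using y by simp
            have Kp: "K y z \<ge> 0" using K0_nn[of y z] y z by (simp add: K0_def)
            show ?thesis
            proof (cases "f z \<ge> 0")
              case True then show ?thesis using y z \<open>x - y < z\<close> by (simp add: K0_def fp_def fi_def)
            next
              case False
              have "K y z * y * f y * f z \<le> 0" using Kp y False
                by (intro mult_nonneg_nonpos) auto
              then show ?thesis using y z \<open>x - y < z\<close> False by (simp add: K0_def fp_def fi_def ennreal_neg)
            qed
          qed
        qed
        then show ?thesis using True by simp
      qed
    qed
    show "ennreal (x\<^sup>2 * fp f x) =
   (\<integral>\<^sup>+y. (if 0 < y \<and> y < x then (\<integral>\<^sup>+z. (if x - y < z then ennreal (K0 K y z * y * fp f y * fp f z) else 0) \<partial>lebesgue) else 0) \<partial>lebesgue)"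
      using elim x L R by simp
  qed
qed


end

lemma int_inv_sq:
  fixes y z :: real assumes y: "0 < y" and z: "0 < z"
  shows "(\<integral>\<^sup>+x. (if y < x \<and> x < y + z then ennreal (1/x\<^sup>2) else 0) \<partial>lebesgue) = ennreal (1/y - 1/(y+z))"
proof -
  have d: "((\<lambda>x. - inverse x) has_vector_derivative (1/x\<^sup>2)) (at x within {y..y+z})" if "x \<in> {y..y+z}" for x :: real
  proof -
    have "x \<noteq> 0" using that y by auto
    then have "((\<lambda>x. - inverse x) has_real_derivative (1/x\<^sup>2)) (at x within {y..y+z})"
      by (auto intro!: derivative_eq_intros simp: power2_eq_square field_simps)
    then show ?thesis by (simp add: has_real_derivative_iff_has_vector_derivative)
  qed
  have "((\<lambda>x::real. 1/x\<^sup>2) has_integral (- inverse (y+z) - - inverse y)) {y..y+z}"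
    using fundamental_theorem_of_calculus[OF _ d] z by simp
  then have I: "((\<lambda>x::real. 1/x\<^sup>2) has_integral (1/y - 1/(y+z))) {y<..<y+z}"
    using has_integral_open_interval[of "\<lambda>x::real. 1/x\<^sup>2" _ y "y+z"] by (simp add: field_simps)
  have "(\<integral>\<^sup>+x. (if y < x \<and> x < y + z then ennreal (1/x\<^sup>2) else 0) \<partial>lebesgue)
      = (\<integral>\<^sup>+x. ennreal (1/x\<^sup>2) * indicator {y<..<y+z} x \<partial>lborel)"
    by (simp add: nn_integral_completion, intro nn_integral_cong, simp add: indicator_def)
  also have "\<dots> = ennreal (1/y - 1/(y+z))"
    by (rule nn_integral_has_integral_lebesgue'[OF _ I]) simp
  finally show ?thesis .
qed

context prof begin


lemma phi_lower:
  assumes e: "e > 0"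
  shows "(\<integral>\<^sup>+y. \<integral>\<^sup>+z. (if e < y \<and> e < z then ennreal (K0 K y z * fp f y * fp f z * (z/(y+z))) else 0) \<partial>lebesgue \<partial>lebesgue)
    \<le> (\<integral>\<^sup>+x. (if e < x then ennreal (fp f x) else 0) \<partial>lebesgue)"
proof -
  define H where "H x y z = (if e < y \<and> e < z \<and> y < x \<and> x < y + z then ennreal (1/x\<^sup>2) * ennreal (K0 K y z * y * fp f y * fp f z) else 0)" for x y z :: real
  have Hm: "(\<lambda>(x,z). H x y z) \<in> borel_measurable (lebesgue \<Otimes>\<^sub>M lebesgue)" for y unfolding H_def by measurable
  have Hm2: "(\<lambda>(x,y). \<integral>\<^sup>+z. H x y z \<partial>lebesgue) \<in> borel_measurable (lebesgue \<Otimes>\<^sub>M lebesgue)" unfolding H_def by measurable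
  have "(\<integral>\<^sup>+y. \<integral>\<^sup>+z. (if e < y \<and> e < z then ennreal (K0 K y z * fp f y * fp f z * (z/(y+z))) else 0) \<partial>lebesgue \<partial>lebesgue)
     = (\<integral>\<^sup>+y. \<integral>\<^sup>+z. \<integral>\<^sup>+x. H x y z \<partial>lebesgue \<partial>lebesgue \<partial>lebesgue)"
  proof (intro nn_integral_cong)
    fix y z :: real
    show "(if e < y \<and> e < z then ennreal (K0 K y z * fp f y * fp f z * (z/(y+z))) else 0) = (\<integral>\<^sup>+x. H x y z \<partial>lebesgue)"
    proof (cases "e < y \<and> e < z")
      case False 
      then have "H x y z = 0" for x by (auto simp: H_def)
      then show ?thesis using False by auto
    next
      case True
      then have y: "y > 0" and z: "z > 0" using e by auto
      have "(\<integral>\<^sup>+x. H x y z \<partial>lebesgue) = (\<integral>\<^sup>+x. ennreal (K0 K y z * y * fp f y * fp f z) * (if y < x \<and> x < y + z then ennreal (1/x\<^sup>2) else 0) \<partial>lebesgue)"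
        by (intro nn_integral_cong) (simp add: H_def True mult.commute)
      also have "\<dots> = ennreal (K0 K y z * y * fp f y * fp f z) * (\<integral>\<^sup>+x. (if y < x \<and> x < y + z then ennreal (1/x\<^sup>2) else 0) \<partial>lebesgue)"
        by (rule nn_integral_cmult) measurable
      also have "\<dots> = ennreal (K0 K y z * y * fp f y * fp f z) * ennreal (1/y - 1/(y+z))"
        using int_inv_sq[OF y z] by simp
      also have "\<dots> = ennreal (K0 K y z * y * fp f y * fp f z * (1/y - 1/(y+z)))"
        using y z K0_nn[of y z] fp_nn[of y] fp_nn[of z]
        by (intro ennreal_mult[symmetric]) (auto simp: field_simps)
      also have "K0 K y z * y * fp f y * fp f z * (1/y - 1/(y+z)) = K0 K y z * fp f y * fp f z * (y * (1/y - 1/(y+z)))"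
        by (simp add: ac_simps)
      also have "y * (1/y - 1/(y+z)) = z/(y+z)"
      proof -
        have yz: "y + z \<noteq> 0" "y \<noteq> 0" using y z by auto
        have "y * (1/y - 1/(y+z)) = 1 - y/(y+z)" using yz by (simp add: right_diff_distrib)
        also have "\<dots> = z/(y+z)" using yz by (simp add: field_simps)
        finally show ?thesis .
      qed
      finally show ?thesis using True by simp
    qed
  qed
  also have "\<dots> = (\<integral>\<^sup>+y. \<integral>\<^sup>+x. \<integral>\<^sup>+z. H x y z \<partial>lebesgue \<partial>lebesgue \<partial>lebesgue)"
    by (rule nn_integral_cong) (use lebP.Fubini[OF Hm] in simp)
  also have "\<dots> = (\<integral>\<^sup>+x. \<integral>\<^sup>+y. \<integral>\<^sup>+z. H x y z \<partial>lebesgue \<partial>lebesgue \<partial>lebesgue)"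
    using lebP.Fubini[OF Hm2] by simp
  also have "\<dots> \<le> (\<integral>\<^sup>+x. (if e < x then ennreal (1/x\<^sup>2) * 
      (\<integral>\<^sup>+y. (if 0 < y \<and> y < x then (\<integral>\<^sup>+z. (if x - y < z then ennreal (K0 K y z * y * fp f y * fp f z) else 0) \<partial>lebesgue) else 0) \<partial>lebesgue) else 0) \<partial>lebesgue)"
  proof (intro nn_integral_mono)
    fix x :: real
    show "(\<integral>\<^sup>+y. \<integral>\<^sup>+z. H x y z \<partial>lebesgue \<partial>lebesgue) \<le> (if e < x then ennreal (1/x\<^sup>2) * 
      (\<integral>\<^sup>+y. (if 0 < y \<and> y < x then (\<integral>\<^sup>+z. (if x - y < z then ennreal (K0 K y z * y * fp f y * fp f z) else 0) \<partial>lebesgue) else 0) \<partial>lebesgue) else 0)"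
    proof (cases "e < x")
      case False
      then have "H x y z = 0" for y z by (simp add: H_def)
      then show ?thesis by simp
    next
      case True
      have "ennreal (1/x\<^sup>2) * 
      (\<integral>\<^sup>+y. (if 0 < y \<and> y < x then (\<integral>\<^sup>+z. (if x - y < z then ennreal (K0 K y z * y * fp f y * fp f z) else 0) \<partial>lebesgue) else 0) \<partial>lebesgue)
        = (\<integral>\<^sup>+y. ennreal (1/x\<^sup>2) * (if 0 < y \<and> y < x then (\<integral>\<^sup>+z. (if x - y < z then ennreal (K0 K y z * y * fp f y * fp f z) else 0) \<partial>lebesgue) else 0) \<partial>lebesgue)"
        by (rule nn_integral_cmult[symmetric]) measurable
      also have "\<dots> \<ge> (\<integral>\<^sup>+y. \<integral>\<^sup>+z. H x y z \<partial>lebesgue \<partial>lebesgue)"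
      proof (intro nn_integral_mono)
        fix y :: real
        show "(\<integral>\<^sup>+z. H x y z \<partial>lebesgue) \<le> ennreal (1/x\<^sup>2) * (if 0 < y \<and> y < x then (\<integral>\<^sup>+z. (if x - y < z then ennreal (K0 K y z * y * fp f y * fp f z) else 0) \<partial>lebesgue) else 0)"
        proof (cases "0 < y \<and> y < x")
          case False
          then have "H x y z = 0" for z using e by (auto simp: H_def)
          then show ?thesis by simp
        next
          case True
          have "ennreal (1/x\<^sup>2) * (\<integral>\<^sup>+z. (if x - y < z then ennreal (K0 K y z * y * fp f y * fp f z) else 0) \<partial>lebesgue)
            = (\<integral>\<^sup>+z. ennreal (1/x\<^sup>2) * (if x - y < z then ennreal (K0 K y z * y * fp f y * fp f z) else 0) \<partial>lebesgue)"
            by (rule nn_integral_cmult[symmetric]) measurable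
          also have "\<dots> \<ge> (\<integral>\<^sup>+z. H x y z \<partial>lebesgue)"
            by (intro nn_integral_mono) (auto simp: H_def)
          finally show ?thesis using True by simp
        qed
      qed
      finally show ?thesis using True by simp
    qed
  qed
  also have "\<dots> = (\<integral>\<^sup>+x. (if e < x then ennreal (fp f x) else 0) \<partial>lebesgue)"
    using eqp
  proof (intro nn_integral_cong_AE, eventually_elim)
    case (elim x)
    show ?case
    proof (cases "e < x")
      case True
      then have x: "x > 0" using e by simp
      have "ennreal (1/x\<^sup>2) * ennreal (x\<^sup>2 * fp f x) = ennreal (1/x\<^sup>2 * (x\<^sup>2 * fp f x))"
        using fp_nn[of x] by (intro ennreal_mult[symmetric]) auto
      also have "1/x\<^sup>2 * (x\<^sup>2 * fp f x) = fp f x" using x by simp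
      finally show ?thesis using elim x True by simp
    qed simp
  qed
  finally show ?thesis .
qed


lemma sym_half:
  assumes e: "e > 0"
  shows "(\<integral>\<^sup>+y. \<integral>\<^sup>+z. (if e < y \<and> e < z then ennreal (K0 K y z * fp f y * fp f z) else 0) \<partial>lebesgue \<partial>lebesgue)
    \<le> 2 * (\<integral>\<^sup>+x. (if e < x then ennreal (fp f x) else 0) \<partial>lebesgue)"
proof -
  define A where "A y z = (if e < y \<and> e < z then ennreal (K0 K y z * fp f y * fp f z * (z/(y+z))) else 0)" for y z :: real
  define B where "B y z = (if e < y \<and> e < z then ennreal (K0 K y z * fp f y * fp f z * (y/(y+z))) else 0)" for y z :: real
  have Am: "(\<lambda>(y,z). A y z) \<in> borel_measurable (lebesgue \<Otimes>\<^sub>M lebesgue)" unfolding A_def by measurable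
  have AB: "A z y = B y z" for y z unfolding A_def B_def by (auto simp: K0_sym[of z y] ac_simps)
  have "(\<integral>\<^sup>+y. \<integral>\<^sup>+z. B y z \<partial>lebesgue \<partial>lebesgue) = (\<integral>\<^sup>+y. \<integral>\<^sup>+z. A z y \<partial>lebesgue \<partial>lebesgue)"
    by (simp add: AB)
  also have "\<dots> = (\<integral>\<^sup>+y. \<integral>\<^sup>+z. A y z \<partial>lebesgue \<partial>lebesgue)"
    using lebP.Fubini[OF Am] by simp
  finally have BA: "(\<integral>\<^sup>+y. \<integral>\<^sup>+z. B y z \<partial>lebesgue \<partial>lebesgue) = (\<integral>\<^sup>+y. \<integral>\<^sup>+z. A y z \<partial>lebesgue \<partial>lebesgue)" .
  have "(\<integral>\<^sup>+y. \<integral>\<^sup>+z. (if e < y \<and> e < z then ennreal (K0 K y z * fp f y * fp f z) else 0) \<partial>lebesgue \<partial>lebesgue)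
     = (\<integral>\<^sup>+y. \<integral>\<^sup>+z. A y z + B y z \<partial>lebesgue \<partial>lebesgue)"
  proof (intro nn_integral_cong)
    fix y z :: real
    show "(if e < y \<and> e < z then ennreal (K0 K y z * fp f y * fp f z) else 0) = A y z + B y z"
    proof (cases "e < y \<and> e < z")
      case True
      then have yz: "y + z \<noteq> 0" "y + z > 0" using e by auto
      define a where "a = K0 K y z * fp f y * fp f z"
      have a: "a \<ge> 0" unfolding a_def using K0_nn fp_nn by auto
      have "A y z + B y z = ennreal (a * (z/(y+z))) + ennreal (a * (y/(y+z)))"
        using True by (simp add: A_def B_def a_def)
      also have "\<dots> = ennreal (a * (z/(y+z)) + a * (y/(y+z)))"
        using a True e yz by (intro ennreal_plus[symmetric]) auto
      also have "a * (z/(y+z)) + a * (y/(y+z)) = a * ((z + y)/(y+z))"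
        by (simp add: add_divide_distrib distrib_left)
      also have "\<dots> = a" using yz by (simp add: add.commute)
      finally show ?thesis using True by (simp add: a_def)
    qed (auto simp: A_def B_def)
  qed
  also have "\<dots> = (\<integral>\<^sup>+y. (\<integral>\<^sup>+z. A y z \<partial>lebesgue) + (\<integral>\<^sup>+z. B y z \<partial>lebesgue) \<partial>lebesgue)"
    by (rule nn_integral_cong, rule nn_integral_add) (auto simp: A_def B_def)
  also have "\<dots> = (\<integral>\<^sup>+y. \<integral>\<^sup>+z. A y z \<partial>lebesgue \<partial>lebesgue) + (\<integral>\<^sup>+y. \<integral>\<^sup>+z. B y z \<partial>lebesgue \<partial>lebesgue)"
    by (rule nn_integral_add) (auto simp: A_def B_def)
  also have "\<dots> = 2 * (\<integral>\<^sup>+y. \<integral>\<^sup>+z. A y z \<partial>lebesgue \<partial>lebesgue)"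
    by (simp add: BA mult_2)
  also have "\<dots> \<le> 2 * (\<integral>\<^sup>+x. (if e < x then ennreal (fp f x) else 0) \<partial>lebesgue)"
    using phi_lower[OF e] unfolding A_def by (intro mult_left_mono) auto
  finally show ?thesis .
qed

lemma c0_lower:
  assumes e: "e > 0"
  shows "ennreal c0 * (\<integral>\<^sup>+x. (if e < x then ennreal (fp f x) else 0) \<partial>lebesgue) * (\<integral>\<^sup>+x. (if e < x then ennreal (fp f x) else 0) \<partial>lebesgue)
    \<le> (\<integral>\<^sup>+y. \<integral>\<^sup>+z. (if e < y \<and> e < z then ennreal (K0 K y z * fp f y * fp f z) else 0) \<partial>lebesgue \<partial>lebesgue)"
proof -
  define P where "P = (\<integral>\<^sup>+x. (if e < x then ennreal (fp f x) else 0) \<partial>lebesgue)"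
  have "ennreal c0 * P * P = (\<integral>\<^sup>+y. ennreal c0 * (if e < y then ennreal (fp f y) else 0) \<partial>lebesgue) * P"
    unfolding P_def by (subst nn_integral_cmult) auto
  also have "\<dots> = (\<integral>\<^sup>+y. ennreal c0 * (if e < y then ennreal (fp f y) else 0) * P \<partial>lebesgue)"
    by (rule nn_integral_multc[symmetric]) auto
  also have "\<dots> = (\<integral>\<^sup>+y. \<integral>\<^sup>+z. ennreal c0 * (if e < y then ennreal (fp f y) else 0) * (if e < z then ennreal (fp f z) else 0) \<partial>lebesgue \<partial>lebesgue)"
    unfolding P_def by (rule nn_integral_cong, rule nn_integral_cmult[symmetric]) auto
  also have "\<dots> \<le> (\<integral>\<^sup>+y. \<integral>\<^sup>+z. (if e < y \<and> e < z then ennreal (K0 K y z * fp f y * fp f z) else 0) \<partial>lebesgue \<partial>lebesgue)"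
  proof (intro nn_integral_mono)
    fix y z :: real
    show "ennreal c0 * (if e < y then ennreal (fp f y) else 0) * (if e < z then ennreal (fp f z) else 0)
      \<le> (if e < y \<and> e < z then ennreal (K0 K y z * fp f y * fp f z) else 0)"
    proof (cases "e < y \<and> e < z")
      case True
      then have "y > 0" "z > 0" using e by auto
      then have k: "c0 \<le> K0 K y z" by (rule K0_c0)
      have "ennreal c0 * ennreal (fp f y) * ennreal (fp f z) = ennreal (c0 * fp f y * fp f z)"
        using c0 fp_nn by (simp add: ennreal_mult)
      also have "\<dots> \<le> ennreal (K0 K y z * fp f y * fp f z)"
        using k fp_nn by (intro ennreal_leI mult_right_mono) (auto intro: mult_nonneg_nonneg)
      finally show ?thesis using True by simp
    qed auto
  qed
  finally show ?thesis unfolding P_def .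
qed

lemma phi_finite:
  assumes e: "e > 0"
  shows "(\<integral>\<^sup>+x. (if e < x then ennreal (fp f x) else 0) \<partial>lebesgue) < \<infinity>"
proof -
  have "(\<integral>\<^sup>+x. (if e < x then ennreal (fp f x) else 0) \<partial>lebesgue) \<le> (\<integral>\<^sup>+x. ennreal (1/e) * ennreal (norm (x * fi f x)) \<partial>lebesgue)"
  proof (intro nn_integral_mono)
    fix x :: real
    show "(if e < x then ennreal (fp f x) else 0) \<le> ennreal (1/e) * ennreal (norm (x * fi f x))"
    proof (cases "e < x")
      case True
      have "fp f x \<le> \<bar>fi f x\<bar>" by (simp add: fp_def)
      also have "\<dots> \<le> 1/e * \<bar>x * fi f x\<bar>" using True e
        by (simp add: abs_mult field_simps mult_right_mono)
      finally show ?thesis using True e by (simp add: ennreal_mult[symmetric] ennreal_leI)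
    qed auto
  qed
  also have "\<dots> = ennreal (1/e) * (\<integral>\<^sup>+x. ennreal (norm (x * fi f x)) \<partial>lebesgue)"
    by (rule nn_integral_cmult) (use xfi_int in auto)
  also have "\<dots> < \<infinity>" using xfi_int unfolding integrable_iff_bounded
    by (simp add: ennreal_mult_less_top)
  finally show ?thesis .
qed

lemma phi_bound:
  assumes e: "e > 0"
  shows "(\<integral>\<^sup>+x. (if e < x then ennreal (fp f x) else 0) \<partial>lebesgue) \<le> ennreal (2 / c0)"
proof -
  define P where "P = (\<integral>\<^sup>+x. (if e < x then ennreal (fp f x) else 0) \<partial>lebesgue)"
  have le: "ennreal c0 * P * P \<le> 2 * P"
    using c0_lower[OF e] sym_half[OF e] unfolding P_def by (rule order_trans)
  have "P < \<infinity>" unfolding P_def by (rule phi_finite[OF e])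
  then obtain r where r: "P = ennreal r" "r \<ge> 0" by (cases P) auto
  have e2: "2 * ennreal r = ennreal (2 * r)" using r by (simp add: ennreal_mult)
  have "ennreal (c0 * r * r) \<le> ennreal (2 * r)"
    using le r c0 e2 by (simp add: ennreal_mult[symmetric])
  then have "c0 * r * r \<le> 2 * r" using r by (simp add: ennreal_le_iff)
  then have "r \<le> 2 / c0"
  proof (cases "r = 0")
    case False
    then have "c0 * r \<le> 2" using r \<open>c0 * r * r \<le> 2 * r\<close> by (simp add: mult_le_cancel_right)
    then show ?thesis using c0 by (simp add: field_simps)
  qed (use c0 in simp)
  then show ?thesis unfolding P_def[symmetric] r by (simp add: ennreal_leI)
qed


lemma sup_ind: "(SUP n::nat. (if 1 / real (Suc n) < x then c else (0::ennreal))) = (if 0 < x then c else 0)"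
proof (cases "0 < x")
  case True
  then obtain n :: nat where n: "inverse (real (Suc n)) < x" using reals_Archimedean by blast
  have "(SUP n::nat. (if 1 / real (Suc n) < x then c else (0::ennreal))) = c"
  proof (rule antisym)
    show "(SUP n::nat. (if 1 / real (Suc n) < x then c else (0::ennreal))) \<le> c"
      by (rule SUP_least) auto
    show "c \<le> (SUP n::nat. (if 1 / real (Suc n) < x then c else (0::ennreal)))"
      by (rule SUP_upper2[of n]) (use n in \<open>auto simp: inverse_eq_divide\<close>)
  qed
  then show ?thesis using True by simp
next
  case False
  have "1 / real (Suc n) > 0" for n by simp
  then have "\<not> 1 / real (Suc n) < x" for n using False by (meson less_trans not_less)
  then show ?thesis using False by simp
qed

lemma inc_ind: "incseq (\<lambda>n::nat. \<lambda>x::real. (if 1 / real (Suc n) < x then c else (0::ennreal)))"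
proof (rule incseq_SucI, rule le_funI)
  fix n :: nat and x :: real
  have "1 / real (Suc (Suc n)) \<le> 1 / real (Suc n)" by (simp add: frac_le)
  then show "(if 1 / real (Suc n) < x then c else 0) \<le> (if 1 / real (Suc (Suc n)) < x then c else (0::ennreal))"
    by auto
qed

lemma fp_total: "(\<integral>\<^sup>+x. ennreal (fp f x) \<partial>lebesgue) \<le> ennreal (2 / c0)"
proof -
  have "(\<integral>\<^sup>+x. ennreal (fp f x) \<partial>lebesgue) = (\<integral>\<^sup>+x. (SUP n::nat. (if 1 / real (Suc n) < x then ennreal (fp f x) else 0)) \<partial>lebesgue)"
    by (rule nn_integral_cong) (subst sup_ind, simp add: fp_0)
  also have "\<dots> = (SUP n::nat. \<integral>\<^sup>+x. (if 1 / real (Suc n) < x then ennreal (fp f x) else 0) \<partial>lebesgue)"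
  proof (rule nn_integral_monotone_convergence_SUP)
    show "incseq (\<lambda>n x. if 1 / real (Suc n) < x then ennreal (fp f x) else 0)"
      using inc_ind by (auto simp: incseq_def le_fun_def)
  qed measurable
  also have "\<dots> \<le> ennreal (2 / c0)"
    by (rule SUP_least, rule phi_bound) simp
  finally show ?thesis .
qed

lemma J_total: "(\<integral>\<^sup>+y. \<integral>\<^sup>+z. ennreal (K0 K y z * fp f y * fp f z) \<partial>lebesgue \<partial>lebesgue) \<le> ennreal (4 / c0)"
proof -
  have m: "(\<lambda>p. ennreal (K0 K (fst p) (snd p) * fp f (fst p) * fp f (snd p))) \<in> borel_measurable (lebesgue \<Otimes>\<^sub>M lebesgue)"
    by measurable
  have "(\<integral>\<^sup>+y. \<integral>\<^sup>+z. ennreal (K0 K y z * fp f y * fp f z) \<partial>lebesgue \<partial>lebesgue)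
     = (\<integral>\<^sup>+p. ennreal (K0 K (fst p) (snd p) * fp f (fst p) * fp f (snd p)) \<partial>(lebesgue \<Otimes>\<^sub>M lebesgue))"
    using lebL.nn_integral_fst[OF m] by simp
  also have "\<dots> = (\<integral>\<^sup>+p. (SUP n::nat. (if 1 / real (Suc n) < min (fst p) (snd p) then ennreal (K0 K (fst p) (snd p) * fp f (fst p) * fp f (snd p)) else 0)) \<partial>(lebesgue \<Otimes>\<^sub>M lebesgue))"
    by (rule nn_integral_cong) (subst sup_ind, auto simp: fp_0 min_def)
  also have "\<dots> = (SUP n::nat. \<integral>\<^sup>+p. (if 1 / real (Suc n) < min (fst p) (snd p) then ennreal (K0 K (fst p) (snd p) * fp f (fst p) * fp f (snd p)) else 0) \<partial>(lebesgue \<Otimes>\<^sub>M lebesgue))"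
  proof (rule nn_integral_monotone_convergence_SUP)
    show "incseq (\<lambda>n p. if 1 / real (Suc n) < min (fst p) (snd p) then ennreal (K0 K (fst p) (snd p) * fp f (fst p) * fp f (snd p)) else 0)"
    proof (rule incseq_def[THEN iffD2], intro allI impI le_funI)
      fix m n :: nat and p :: "real \<times> real" assume "m \<le> n"
      then have "1/real(Suc n) \<le> 1/real(Suc m)" by (simp add: frac_le)
      then show "(if 1 / real (Suc m) < min (fst p) (snd p) then ennreal (K0 K (fst p) (snd p) * fp f (fst p) * fp f (snd p)) else 0)
         \<le> (if 1 / real (Suc n) < min (fst p) (snd p) then ennreal (K0 K (fst p) (snd p) * fp f (fst p) * fp f (snd p)) else 0)"
        by auto
    qed
  qed measurable
  also have "\<dots> \<le> ennreal (4 / c0)"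
  proof (rule SUP_least)
    fix n :: nat
    define e where "e = 1 / real (Suc n)"
    have e: "e > 0" unfolding e_def by simp
    have m2: "(\<lambda>p. (if e < min (fst p) (snd p) then ennreal (K0 K (fst p) (snd p) * fp f (fst p) * fp f (snd p)) else 0)) \<in> borel_measurable (lebesgue \<Otimes>\<^sub>M lebesgue)"
      by measurable
    have "(\<integral>\<^sup>+p. (if e < min (fst p) (snd p) then ennreal (K0 K (fst p) (snd p) * fp f (fst p) * fp f (snd p)) else 0) \<partial>(lebesgue \<Otimes>\<^sub>M lebesgue))
      = (\<integral>\<^sup>+y. \<integral>\<^sup>+z. (if e < y \<and> e < z then ennreal (K0 K y z * fp f y * fp f z) else 0) \<partial>lebesgue \<partial>lebesgue)"
      by (subst lebL.nn_integral_fst[OF m2, symmetric]) (simp cong: if_cong)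
    also have "\<dots> \<le> 2 * ennreal (2 / c0)"
      using sym_half[OF e] phi_bound[OF e] by (meson order_trans mult_left_mono zero_le)
    also have "\<dots> = ennreal (2 * (2 / c0))" using c0 by (subst ennreal_mult) auto
    also have "\<dots> = ennreal (4 / c0)" by simp
    finally show "(\<integral>\<^sup>+p. (if 1 / real (Suc n) < min (fst p) (snd p) then ennreal (K0 K (fst p) (snd p) * fp f (fst p) * fp f (snd p)) else 0) \<partial>(lebesgue \<Otimes>\<^sub>M lebesgue)) \<le> ennreal (4 / c0)"
      unfolding e_def .
  qed
  finally show ?thesis .
qed


lemma fi_int: "integrable lebesgue (fi f)"
proof (rule integrableI_bounded)
  have "(\<integral>\<^sup>+x. ennreal (norm (fi f x)) \<partial>lebesgue) = (\<integral>\<^sup>+x. ennreal (fp f x) \<partial>lebesgue)"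
    using fp_AE' by (intro nn_integral_cong_AE) auto
  also have "\<dots> \<le> ennreal (2 / c0)" by (rule fp_total)
  finally show "(\<integral>\<^sup>+x. ennreal (norm (fi f x)) \<partial>lebesgue) < \<infinity>"
    by (simp add: le_less_trans)
qed simp

lemma f_set_int: "set_integrable lebesgue {0<..} f"
proof -
  have "(\<lambda>x. indicator {0<..} x *\<^sub>R f x) = fi f" by (auto simp: fi_def fun_eq_iff)
  then show ?thesis using fi_int unfolding set_integrable_def by simp
qed

lemma AE2:
  fixes F :: "real \<Rightarrow> real \<Rightarrow> real \<Rightarrow> real \<Rightarrow> ennreal"
  shows "(\<integral>\<^sup>+x. \<integral>\<^sup>+y. F x y (fi f x) (fi f y) \<partial>lebesgue \<partial>lebesgue) = (\<integral>\<^sup>+x. \<integral>\<^sup>+y. F x y (fp f x) (fp f y) \<partial>lebesgue \<partial>lebesgue)"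
  using fp_AE
proof (intro nn_integral_cong_AE, eventually_elim)
  case (elim x)
  show ?case using fp_AE by (intro nn_integral_cong_AE, eventually_elim) (simp add: elim)
qed

lemma AE2':
  fixes F :: "real \<Rightarrow> real \<Rightarrow> real \<Rightarrow> real \<Rightarrow> ennreal"
  shows "(\<integral>\<^sup>+x. \<integral>\<^sup>+y. F x y \<bar>fi f x\<bar> \<bar>fi f y\<bar> \<partial>lebesgue \<partial>lebesgue) = (\<integral>\<^sup>+x. \<integral>\<^sup>+y. F x y (fp f x) (fp f y) \<partial>lebesgue \<partial>lebesgue)"
  using fp_AE'
proof (intro nn_integral_cong_AE, eventually_elim)
  case (elim x)
  show ?case using fp_AE' by (intro nn_integral_cong_AE, eventually_elim) (simp add: elim)
qed

lemma Kff_finite: "(\<integral>\<^sup>+ x\<in>{0<..}. (\<integral>\<^sup>+ y\<in>{0<..}. ennreal (K x y * f x * f y) \<partial>lebesgue) \<partial>lebesgue) < \<infinity>"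
proof -
  have "(\<integral>\<^sup>+ x\<in>{0<..}. (\<integral>\<^sup>+ y\<in>{0<..}. ennreal (K x y * f x * f y) \<partial>lebesgue) \<partial>lebesgue)
     = (\<integral>\<^sup>+x. \<integral>\<^sup>+y. ennreal (K0 K x y * fi f x * fi f y) \<partial>lebesgue \<partial>lebesgue)"
  proof (rule nn_integral_cong)
    fix x :: real
    show "(\<integral>\<^sup>+ y\<in>{0<..}. ennreal (K x y * f x * f y) \<partial>lebesgue) * indicator {0<..} x =
      (\<integral>\<^sup>+y. ennreal (K0 K x y * fi f x * fi f y) \<partial>lebesgue)"
    proof (cases "0 < x")
      case True
      then show ?thesis
        by (simp, intro nn_integral_cong) (simp add: K0_def fi_def indicator_def)
    next
      case False
      then show ?thesis by (simp add: fi_def K0_def)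
    qed
  qed
  also have "\<dots> = (\<integral>\<^sup>+x. \<integral>\<^sup>+y. ennreal (K0 K x y * fp f x * fp f y) \<partial>lebesgue \<partial>lebesgue)"
    by (rule AE2[where F="\<lambda>x y a b. ennreal (K0 K x y * a * b)"])
  also have "\<dots> \<le> ennreal (4 / c0)" by (rule J_total)
  finally show ?thesis by (simp add: le_less_trans)
qed

lemma Q_eq: "Qf f q = (\<integral>x. (1 - exp (- q * x)) * fi f x \<partial>lebesgue)"
  unfolding Qf_def set_lebesgue_integral_def
  by (rule Bochner_Integration.integral_cong) (auto simp: fi_def)

lemma Q_int: "q \<ge> 0 \<Longrightarrow> integrable lebesgue (\<lambda>x. (1 - exp (- q * x)) * fi f x)"
proof (rule Bochner_Integration.integrable_bound[OF fi_int])
  assume q: "q \<ge> 0"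
  show "AE x in lebesgue. norm ((1 - exp (- q * x)) * fi f x) \<le> norm (fi f x)"
  proof (rule AE_I2)
    fix x :: real
    show "norm ((1 - exp (- q * x)) * fi f x) \<le> norm (fi f x)"
    proof (cases "x > 0")
      case True
      then have "exp (- q * x) \<le> 1" using q by simp
      moreover have "exp (- q * x) > 0" by simp
      ultimately have "\<bar>1 - exp (- q * x)\<bar> \<le> 1" by simp
      then show ?thesis by (simp add: abs_mult mult_left_le_one_le)
    qed (simp add: fi_def)
  qed
qed simp

lemma exp_lim: fixes x :: real assumes x: "x > 0" shows "((\<lambda>q::real. exp (- q * x)) \<longlongrightarrow> 0) at_top"
proof -
  have "filterlim (\<lambda>q. - q * x) at_bot at_top"
    using x by (auto intro!: filterlim_tendsto_pos_mult_at_top filterlim_ident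
        simp: filterlim_uminus_at_top[symmetric] mult.commute[of _ x])
  then show ?thesis using exp_at_bot filterlim_compose by blast
qed

lemma Q_lim: "(Qf f \<longlongrightarrow> (\<integral>x. fi f x \<partial>lebesgue)) at_top"
proof -
  have "((\<lambda>q. \<integral>x. (1 - exp (- q * x)) * fi f x \<partial>lebesgue) \<longlongrightarrow> (\<integral>x. fi f x \<partial>lebesgue)) at_top"
  proof (rule integral_dominated_convergence_at_top[where w="\<lambda>x. \<bar>fi f x\<bar>"])
    show "integrable lebesgue (\<lambda>x. \<bar>fi f x\<bar>)" using fi_int by auto
    show "AE x in lebesgue. ((\<lambda>q. (1 - exp (- q * x)) * fi f x) \<longlongrightarrow> fi f x) at_top"
    proof (rule AE_I2)
      fix x :: real
      show "((\<lambda>q. (1 - exp (- q * x)) * fi f x) \<longlongrightarrow> fi f x) at_top"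
      proof (cases "x > 0")
        case True
        have "((\<lambda>q. (1 - exp (- q * x)) * fi f x) \<longlongrightarrow> (1 - 0) * fi f x) at_top"
          by (intro tendsto_intros exp_lim True)
        then show ?thesis by simp
      qed (simp add: fi_def)
    qed
    show "\<forall>\<^sub>F q in at_top. AE x in lebesgue. norm ((1 - exp (- q * x)) * fi f x) \<le> \<bar>fi f x\<bar>"
      using eventually_ge_at_top[of "0::real"]
    proof eventually_elim
      case (elim q)
      show ?case
      proof (rule AE_I2)
        fix x :: real
        show "norm ((1 - exp (- q * x)) * fi f x) \<le> \<bar>fi f x\<bar>"
        proof (cases "x > 0")
          case True
          then have "exp (- q * x) \<le> 1" using elim by simp
          moreover have "exp (- q * x) > 0" by simp
          ultimately have "\<bar>1 - exp (- q * x)\<bar> \<le> 1" by simp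
          then show ?thesis by (simp add: abs_mult mult_left_le_one_le)
        qed (simp add: fi_def)
      qed
    qed
  qed measurable
  then show ?thesis by (simp add: Q_eq[abs_def])
qed


lemma D_int: "q \<ge> 0 \<Longrightarrow> integrable lebesgue (\<lambda>x. x * exp (- q * x) * fi f x)"
proof (rule Bochner_Integration.integrable_bound[OF xfi_int])
  assume q: "q \<ge> 0"
  show "AE x in lebesgue. norm (x * exp (- q * x) * fi f x) \<le> norm (x * fi f x)"
  proof (rule AE_I2)
    fix x :: real
    show "norm (x * exp (- q * x) * fi f x) \<le> norm (x * fi f x)"
    proof (cases "x > 0")
      case True
      then have "exp (- q * x) \<le> 1" using q by simp
      then have "\<bar>x\<bar> * exp (- q * x) * \<bar>fi f x\<bar> \<le> \<bar>x\<bar> * 1 * \<bar>fi f x\<bar>"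
        by (intro mult_right_mono mult_left_mono) auto
      then show ?thesis by (simp add: abs_mult)
    qed (simp add: fi_def)
  qed
qed simp

lemma Q_deriv:
  assumes q: "q > 0"
  shows "(Qf f has_real_derivative (\<integral>x. x * exp (- q * x) * fi f x \<partial>lebesgue)) (at q)"
proof -
  define D where "D = (\<integral>x. x * exp (- q * x) * fi f x \<partial>lebesgue)"
  have lim: "((\<lambda>y. (Qf f y - Qf f q) / (y - q)) \<longlongrightarrow> D) (at q within {0<..})"
  proof (subst tendsto_at_iff_sequentially, intro allI impI)
    fix X :: "nat \<Rightarrow> real"
    assume X: "\<forall>i. X i \<in> {0<..} - {q}" and Xq: "X \<longlonglongrightarrow> q"
    have eq: "(Qf f (X i) - Qf f q) / (X i - q) = (\<integral>x. (exp (- q * x) - exp (- X i * x)) / (X i - q) * fi f x \<partial>lebesgue)" for i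
    proof -
      have diff: "Qf f (X i) - Qf f q = (\<integral>x. (exp (- q * x) - exp (- X i * x)) * fi f x \<partial>lebesgue)"
      proof -
        have "X i \<ge> 0" using X by (auto simp: less_imp_le)
        then have "Qf f (X i) - Qf f q = (\<integral>x. (1 - exp (- X i * x)) * fi f x - (1 - exp (- q * x)) * fi f x \<partial>lebesgue)"
          unfolding Q_eq using q by (intro Bochner_Integration.integral_diff[symmetric] Q_int) auto
        also have "\<dots> = (\<integral>x. (exp (- q * x) - exp (- X i * x)) * fi f x \<partial>lebesgue)"
          by (rule Bochner_Integration.integral_cong) (auto simp: algebra_simps)
        finally show ?thesis .
      qed
      have "(\<integral>x. (exp (- q * x) - exp (- X i * x)) * fi f x \<partial>lebesgue) / (X i - q)
          = (\<integral>x. (exp (- q * x) - exp (- X i * x)) * fi f x / (X i - q) \<partial>lebesgue)"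
        by (rule integral_divide_zero[symmetric])
      also have "\<dots> = (\<integral>x. (exp (- q * x) - exp (- X i * x)) / (X i - q) * fi f x \<partial>lebesgue)"
        by (rule Bochner_Integration.integral_cong) auto
      finally show ?thesis unfolding diff .
    qed
    have conv: "(\<lambda>i. \<integral>x. (exp (- q * x) - exp (- X i * x)) / (X i - q) * fi f x \<partial>lebesgue) \<longlonglongrightarrow> D"
      unfolding D_def
    proof (rule integral_dominated_convergence[where w="\<lambda>x. \<bar>x * fi f x\<bar>"])
      show "integrable lebesgue (\<lambda>x. \<bar>x * fi f x\<bar>)" using xfi_int by auto
      show "AE x in lebesgue. (\<lambda>i. (exp (- q * x) - exp (- X i * x)) / (X i - q) * fi f x) \<longlonglongrightarrow> x * exp (- q * x) * fi f x"
      proof (rule AE_I2)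
        fix x :: real
        have "((\<lambda>y. exp (- y * x)) has_real_derivative (- x * exp (- q * x))) (at q)"
          by (auto intro!: derivative_eq_intros)
        then have d: "((\<lambda>y. (exp (- y * x) - exp (- q * x)) / (y - q)) \<longlongrightarrow> (- x * exp (- q * x))) (at q within UNIV)"
          unfolding has_field_derivative_iff .
        have X': "\<And>i. X i \<in> UNIV - {q}" using X by auto
        have "((\<lambda>y. (exp (- y * x) - exp (- q * x)) / (y - q)) \<circ> X) \<longlonglongrightarrow> (- x * exp (- q * x))"
          using tendsto_at_iff_sequentially[THEN iffD1, OF d, rule_format, OF X' Xq] .
        then have "(\<lambda>i. (exp (- X i * x) - exp (- q * x)) / (X i - q)) \<longlonglongrightarrow> (- x * exp (- q * x))"
          by (simp only: comp_def)
        then have "(\<lambda>i. - ((exp (- X i * x) - exp (- q * x)) / (X i - q)) * fi f x) \<longlonglongrightarrow> - (- x * exp (- q * x)) * fi f x"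
          by (intro tendsto_mult tendsto_minus tendsto_const)
        then have L: "(\<lambda>i. - ((exp (- X i * x) - exp (- q * x)) / (X i - q)) * fi f x) \<longlonglongrightarrow> x * exp (- q * x) * fi f x"
          by (simp only: minus_mult_left minus_minus)
        have E: "(\<lambda>i. - ((exp (- X i * x) - exp (- q * x)) / (X i - q)) * fi f x) = (\<lambda>i. (exp (- q * x) - exp (- X i * x)) / (X i - q) * fi f x)"
          by (rule ext) (simp only: minus_divide_left minus_diff_eq)
        show "(\<lambda>i. (exp (- q * x) - exp (- X i * x)) / (X i - q) * fi f x) \<longlonglongrightarrow> x * exp (- q * x) * fi f x"
          using L unfolding E .
      qed
      show "AE x in lebesgue. norm ((exp (- q * x) - exp (- X i * x)) / (X i - q) * fi f x) \<le> \<bar>x * fi f x\<bar>" for i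
      proof (rule AE_I2)
        fix x :: real
        show "norm ((exp (- q * x) - exp (- X i * x)) / (X i - q) * fi f x) \<le> \<bar>x * fi f x\<bar>"
        proof (cases "x > 0")
          case True
          have Xi: "X i > 0" "X i \<noteq> q" using X by auto
          have "\<bar>exp (- (q * x)) - exp (- (X i * x))\<bar> \<le> \<bar>q * x - X i * x\<bar>"
            using True Xi q by (intro exp_lip) auto
          also have "\<dots> = x * \<bar>X i - q\<bar>"
          proof -
            have "q * x - X i * x = - (x * (X i - q))" by (simp add: algebra_simps)
            then have "\<bar>q * x - X i * x\<bar> = \<bar>x * (X i - q)\<bar>" by (simp only: abs_minus_cancel)
            then show ?thesis using True by (simp add: abs_mult)
          qed
          finally have "\<bar>exp (- q * x) - exp (- X i * x)\<bar> / \<bar>X i - q\<bar> \<le> x"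
            using Xi by (simp add: divide_le_eq)
          then have "\<bar>exp (- q * x) - exp (- X i * x)\<bar> / \<bar>X i - q\<bar> * \<bar>fi f x\<bar> \<le> x * \<bar>fi f x\<bar>"
            by (rule mult_right_mono) simp
          then show ?thesis using True by (simp add: abs_mult)
        qed (simp add: fi_def)
      qed
    qed measurable
    show "((\<lambda>y. (Qf f y - Qf f q) / (y - q)) \<circ> X) \<longlonglongrightarrow> D"
      unfolding comp_def eq by (rule conv)
  qed
  have "((\<lambda>y. (Qf f y - Qf f q) / (y - q)) \<longlongrightarrow> D) (at q)"
    using lim at_within_open[of q "{0<..}"] q by simp
  then show ?thesis unfolding D_def has_field_derivative_iff .
qed

lemma D_bound:
  assumes q: "q > 0"
  shows "\<bar>q * (\<integral>x. x * exp (- q * x) * fi f x \<partial>lebesgue)\<bar> \<le> (\<integral>x. \<bar>fi f x\<bar> \<partial>lebesgue)"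
proof -
  have "q * (\<integral>x. x * exp (- q * x) * fi f x \<partial>lebesgue) = (\<integral>x. q * (x * exp (- q * x) * fi f x) \<partial>lebesgue)"
    by simp
  also have "\<bar>\<dots>\<bar> \<le> (\<integral>x. \<bar>fi f x\<bar> \<partial>lebesgue)"
  proof (rule integral_abs_bound_integral)
    show "integrable lebesgue (\<lambda>x. q * (x * exp (- q * x) * fi f x))"
      using D_int q by auto
    show "integrable lebesgue (\<lambda>x. \<bar>fi f x\<bar>)" using fi_int by auto
    fix x :: real
    show "\<bar>q * (x * exp (- q * x) * fi f x)\<bar> \<le> \<bar>fi f x\<bar>"
    proof (cases "x > 0")
      case True
      define t where "t = q * x"
      have t: "t > 0" using q True by (simp add: t_def)
      have "t \<le> exp t" using exp_ge_add_one_self[of t] by linarith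
      then have "t * exp (- t) \<le> 1" by (simp add: exp_minus field_simps)
      moreover have "\<bar>q * (x * exp (- q * x) * fi f x)\<bar> = t * exp (- t) * \<bar>fi f x\<bar>"
        using q True t by (simp add: t_def abs_mult)
      moreover have "t * exp (- t) * \<bar>fi f x\<bar> \<le> 1 * \<bar>fi f x\<bar>"
        using \<open>t * exp (- t) \<le> 1\<close> by (rule mult_right_mono) simp
      ultimately show ?thesis by simp
    qed (simp add: fi_def)
  qed
  finally show ?thesis .
qed


definition "Gq q x y = (K0 K x y - 2) * fi f x * fi f y * (1 - exp (- q * x)) * (1 - exp (- q * y))"
definition "G x y = (K0 K x y - 2) * fi f x * fi f y"

lemma M_eq: "Mff K f q = 1/2 * (\<integral>x. \<integral>y. Gq q x y \<partial>lebesgue \<partial>lebesgue)"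
  unfolding Mff_def set_lebesgue_integral_def
proof (intro arg_cong[where f="\<lambda>t. 1/2 * t"] Bochner_Integration.integral_cong refl)
  fix x :: real
  have "indicator {0<..} x *\<^sub>R (\<integral>y. indicator {0<..} y *\<^sub>R (W K x y * f x * f y * (1 - exp (- q * x)) * (1 - exp (- q * y))) \<partial>lebesgue)
     = (\<integral>y. indicator {0<..} x * (indicator {0<..} y * (W K x y * f x * f y * (1 - exp (- q * x)) * (1 - exp (- q * y)))) \<partial>lebesgue)"
    by simp
  also have "\<dots> = (\<integral>y. Gq q x y \<partial>lebesgue)"
    by (rule Bochner_Integration.integral_cong) (auto simp: Gq_def W_def K0_def fi_def indicator_def)
  finally show "indicator {0<..} x *\<^sub>R (\<integral>y. indicator {0<..} y *\<^sub>R (W K x y * f x * f y * (1 - exp (- q * x)) * (1 - exp (- q * y))) \<partial>lebesgue)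
     = (\<integral>y. Gq q x y \<partial>lebesgue)" .
qed

lemma G_meas[measurable]: "(\<lambda>p. G (fst p) (snd p)) \<in> borel_measurable (lebesgue \<Otimes>\<^sub>M lebesgue)"
  unfolding G_def by measurable

lemma G_int: "integrable (lebesgue \<Otimes>\<^sub>M lebesgue) (\<lambda>p. G (fst p) (snd p))"
proof (rule integrableI_bounded)
  have m: "(\<lambda>p. ennreal (norm (G (fst p) (snd p)))) \<in> borel_measurable (lebesgue \<Otimes>\<^sub>M lebesgue)"
    by measurable
  have "(\<integral>\<^sup>+p. ennreal (norm (G (fst p) (snd p))) \<partial>(lebesgue \<Otimes>\<^sub>M lebesgue))
     = (\<integral>\<^sup>+x. \<integral>\<^sup>+y. ennreal (norm (G x y)) \<partial>lebesgue \<partial>lebesgue)"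
    using lebL.nn_integral_fst[OF m] by simp
  also have "\<dots> \<le> (\<integral>\<^sup>+x. \<integral>\<^sup>+y. ennreal (1 + 2 / c0) * ennreal (K0 K x y * \<bar>fi f x\<bar> * \<bar>fi f y\<bar>) \<partial>lebesgue \<partial>lebesgue)"
  proof (intro nn_integral_mono)
    fix x y :: real
    show "ennreal (norm (G x y)) \<le> ennreal (1 + 2 / c0) * ennreal (K0 K x y * \<bar>fi f x\<bar> * \<bar>fi f y\<bar>)"
    proof (cases "x > 0 \<and> y > 0")
      case True
      then have k: "K0 K x y \<ge> c0" by (intro K0_c0) auto
      have "\<bar>K0 K x y - 2\<bar> \<le> (1 + 2 / c0) * K0 K x y"
      proof -
        have "2 \<le> 2 / c0 * K0 K x y" using k c0 by (simp add: field_simps)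
        then show ?thesis using k c0 by (simp add: algebra_simps abs_le_iff)
      qed
      then have "\<bar>K0 K x y - 2\<bar> * (\<bar>fi f x\<bar> * \<bar>fi f y\<bar>) \<le> (1 + 2 / c0) * K0 K x y * (\<bar>fi f x\<bar> * \<bar>fi f y\<bar>)"
        by (rule mult_right_mono) simp
      then have "norm (G x y) \<le> (1 + 2 / c0) * (K0 K x y * \<bar>fi f x\<bar> * \<bar>fi f y\<bar>)"
        by (simp add: G_def abs_mult ac_simps)
      then show ?thesis using c0 K0_nn[of x y]
        by (subst ennreal_mult[symmetric]) (auto intro!: ennreal_leI)
    next
      case False
      then have "G x y = 0" by (auto simp: G_def fi_def)
      then show ?thesis by simp
    qed
  qed
  also have "\<dots> = ennreal (1 + 2 / c0) * (\<integral>\<^sup>+x. \<integral>\<^sup>+y. ennreal (K0 K x y * \<bar>fi f x\<bar> * \<bar>fi f y\<bar>) \<partial>lebesgue \<partial>lebesgue)"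
    by (subst nn_integral_cmult[symmetric], measurable, rule nn_integral_cong, rule nn_integral_cmult, measurable)
  also have "(\<integral>\<^sup>+x. \<integral>\<^sup>+y. ennreal (K0 K x y * \<bar>fi f x\<bar> * \<bar>fi f y\<bar>) \<partial>lebesgue \<partial>lebesgue)
      = (\<integral>\<^sup>+x. \<integral>\<^sup>+y. ennreal (K0 K x y * fp f x * fp f y) \<partial>lebesgue \<partial>lebesgue)"
    by (rule AE2'[where F="\<lambda>x y a b. ennreal (K0 K x y * a * b)"])
  also have "ennreal (1 + 2 / c0) * \<dots> \<le> ennreal (1 + 2 / c0) * ennreal (4 / c0)"
    by (intro mult_left_mono J_total) simp
  also have "\<dots> < \<infinity>" by (simp add: ennreal_mult_less_top)
  finally show "(\<integral>\<^sup>+p. ennreal (norm (G (fst p) (snd p))) \<partial>(lebesgue \<Otimes>\<^sub>M lebesgue)) < \<infinity>" .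
qed simp


lemma Gq_bound: "q \<ge> 0 \<Longrightarrow> \<bar>Gq q x y\<bar> \<le> \<bar>G x y\<bar>"
proof (cases "x > 0 \<and> y > 0")
  case True
  assume q: "q \<ge> 0"
  have a: "\<bar>1 - exp (- q * x)\<bar> \<le> 1" "\<bar>1 - exp (- q * y)\<bar> \<le> 1"
    using True q by (auto simp: abs_le_iff)
  have "\<bar>Gq q x y\<bar> = \<bar>G x y\<bar> * (\<bar>1 - exp (- q * x)\<bar> * \<bar>1 - exp (- q * y)\<bar>)"
    by (simp add: Gq_def G_def abs_mult ac_simps)
  also have "\<dots> \<le> \<bar>G x y\<bar> * 1"
    using a by (intro mult_left_mono mult_le_one) auto
  finally show ?thesis by simp
next
  case False
  then show ?thesis by (auto simp: Gq_def G_def fi_def)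
qed

lemma Gq_lim: "((\<lambda>q. Gq q x y) \<longlongrightarrow> G x y) at_top"
proof (cases "x > 0 \<and> y > 0")
  case True
  have "((\<lambda>q. G x y * ((1 - exp (- q * x)) * (1 - exp (- q * y)))) \<longlongrightarrow> G x y * ((1 - 0) * (1 - 0))) at_top"
    using True by (intro tendsto_intros exp_lim) auto
  then show ?thesis by (simp add: Gq_def G_def ac_simps)
next
  case False
  then show ?thesis by (auto simp: Gq_def G_def fi_def)
qed

lemma M_lim: "\<exists>L. (Mff K f \<longlongrightarrow> L) at_top"
proof -
  have intx: "AE x in lebesgue. integrable lebesgue (\<lambda>y. G x y)"
    using lebP.AE_integrable_fst'[OF G_int] by simp
  have intw: "integrable lebesgue (\<lambda>x. \<integral>y. \<bar>G x y\<bar> \<partial>lebesgue)"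
    using lebP.integrable_fst'[OF integrable_abs[OF G_int]] by simp
  have "((\<lambda>q. \<integral>x. \<integral>y. Gq q x y \<partial>lebesgue \<partial>lebesgue) \<longlongrightarrow> (\<integral>x. \<integral>y. G x y \<partial>lebesgue \<partial>lebesgue)) at_top"
  proof (rule integral_dominated_convergence_at_top[where w="\<lambda>x. \<integral>y. \<bar>G x y\<bar> \<partial>lebesgue"])
    show "(\<lambda>x. \<integral>y. G x y \<partial>lebesgue) \<in> borel_measurable lebesgue"
      unfolding G_def by measurable
    show "(\<lambda>x. \<integral>y. Gq q x y \<partial>lebesgue) \<in> borel_measurable lebesgue" for q
      unfolding Gq_def by measurable
    show "integrable lebesgue (\<lambda>x. \<integral>y. \<bar>G x y\<bar> \<partial>lebesgue)" by (rule intw)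
    show "AE x in lebesgue. ((\<lambda>q. \<integral>y. Gq q x y \<partial>lebesgue) \<longlongrightarrow> (\<integral>y. G x y \<partial>lebesgue)) at_top"
      using intx
    proof eventually_elim
      case (elim x)
      show ?case
      proof (rule integral_dominated_convergence_at_top[where w="\<lambda>y. \<bar>G x y\<bar>"])
        show "(\<lambda>y. G x y) \<in> borel_measurable lebesgue" unfolding G_def by measurable
        show "(\<lambda>y. Gq q x y) \<in> borel_measurable lebesgue" for q unfolding Gq_def by measurable
        show "integrable lebesgue (\<lambda>y. \<bar>G x y\<bar>)" using elim by auto
        show "AE y in lebesgue. ((\<lambda>q. Gq q x y) \<longlongrightarrow> G x y) at_top"
          by (rule AE_I2) (rule Gq_lim)
        show "\<forall>\<^sub>F q in at_top. AE y in lebesgue. norm (Gq q x y) \<le> \<bar>G x y\<bar>"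
          using eventually_ge_at_top[of "0::real"] by eventually_elim (auto intro: Gq_bound)
      qed
    qed
    show "\<forall>\<^sub>F q in at_top. AE x in lebesgue. norm (\<integral>y. Gq q x y \<partial>lebesgue) \<le> (\<integral>y. \<bar>G x y\<bar> \<partial>lebesgue)"
      using eventually_ge_at_top[of "0::real"]
    proof eventually_elim
      case (elim q)
      note q = elim
      show ?case
        using intx
      proof eventually_elim
        case (elim x)
        have "integrable lebesgue (\<lambda>y. Gq q x y)"
          by (rule Bochner_Integration.integrable_bound[OF elim]) (use q Gq_bound in \<open>auto simp: Gq_def\<close>)
        then show ?case
          using elim q Gq_bound by (simp only: real_norm_def, intro integral_abs_bound_integral) auto
      qed
    qed
  qed
  then have "((\<lambda>q. 1/2 * (\<integral>x. \<integral>y. Gq q x y \<partial>lebesgue \<partial>lebesgue)) \<longlongrightarrow> 1/2 * (\<integral>x. \<integral>y. G x y \<partial>lebesgue \<partial>lebesgue)) at_top"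
    by (intro tendsto_mult tendsto_const)
  then show ?thesis unfolding M_eq[abs_def] by blast
qed

end

theorem lemma2p3:
  fixes \<alpha> \<epsilon> C\<^sub>0 c\<^sub>0 :: real and K :: "real \<Rightarrow> real \<Rightarrow> real" and f :: "real \<Rightarrow> real"
  assumes "kernel_assms \<alpha> \<epsilon> C\<^sub>0 K"
    and "c\<^sub>0 > 0" and "\<forall>x>0. \<forall>y>0. K x y \<ge> c\<^sub>0"
    and "self_similar_profile K f"
    and "(LINT x:{0<..}|lebesgue. x * f x) = 1"
  shows "(\<exists>L. (Qf f \<longlongrightarrow> L) at_top)
    \<and> set_integrable lebesgue {0<..} f
    \<and> (\<exists>C. \<forall>q>0. \<exists>D. (Qf f has_real_derivative D) (at q) \<and> \<bar>q * D\<bar> \<le> C)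
    \<and> (\<integral>\<^sup>+ x\<in>{0<..}. (\<integral>\<^sup>+ y\<in>{0<..}. ennreal (K x y * f x * f y) \<partial>lebesgue) \<partial>lebesgue) < \<infinity>
    \<and> (\<exists>L. (Mff K f \<longlongrightarrow> L) at_top)"
proof -
  have Ksym: "\<forall>x>0. \<forall>y>0. K x y = K y x"
    and Kd: "\<forall>x>0. \<forall>y>0. (\<lambda>p. K (fst p) (snd p)) differentiable (at (x, y))"
    using assms(1) unfolding kernel_assms_def by auto
  have xf: "set_integrable lebesgue {0<..} (\<lambda>x. x * f x)"
    and fnn: "AE x in lebesgue. x > 0 \<longrightarrow> f x \<ge> 0"
    and eqn: "AE x in lebesgue. x > 0 \<longrightarrow>
        ennreal (x\<^sup>2 * f x) =
          (\<integral>\<^sup>+ y\<in>{0<..<x}. (\<integral>\<^sup>+ z\<in>{x - y<..}. ennreal (K y z * y * f y * f z) \<partial>lebesgue) \<partial>lebesgue)"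
    using assms(4) unfolding self_similar_profile_def by auto
  interpret P: prof K f c\<^sub>0
    using assms(2,3) Ksym K_cont[OF Kd] xf fnn eqn by unfold_locales
  have c3: "\<exists>C. \<forall>q>0. \<exists>D. (Qf f has_real_derivative D) (at q) \<and> \<bar>q * D\<bar> \<le> C"
    using P.Q_deriv P.D_bound by blast
  show ?thesis using P.Q_lim P.f_set_int c3 P.Kff_finite P.M_lim by blast
qed

end
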